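(* Let $\rho,k\ge 1$ and let $\mathcal{F}$ be a finite family of $\rho$-fat objects in the plane with size-ratio at most $k$, and let $G$ be its intersection graph. Then $\chi_{CF}^{pn}(G)=O(k^2\rho^2)$ and $\chi_{CF}^{cn}(G)=O(\rho^2\log k)$ (for $k\ge2$ in the latter), where the implied constants are absolute.
   Context: A simple Jordan region $C$ in the plane is $\rho$-fat if there exist $x\in C$ and discs $A,B$ centered at $x$ with radii $r_A,r_B$ such that $A\subseteq C\subseteq B$ and $r_B/r_A\le\rho$. The size of a $\rho$-fat object $C$ is the maximum of $r_A$ over all such pairs $A,B$. The size-ratio of $\mathcal{F}$ is $\max_{C_1,C_2\in\mathcal{F}}\mathrm{size}(C_1)/\mathrm{size}(C_2)$. The intersection graph of $\mathcal{F}$ has vertex set $\mathcal{F}$, with distinct $C_1,C_2$ adjacent iff $C_1\cap C_2\neq\emptyset$. A coloring of $V(G)$ is a pointed (resp. closed) CF-coloring if for every $v$ with $N_G(v)\neq\emptyset$ (resp. for every $v$), the set $N_G(v)=\{u:\{u,v\}\in E(G)\}$ (resp. $N_G[v]=N_G(v)\cup\{v\}$) contains a vertex whose color differs from the colors of all other vertices of that set; $\chi_{CF}^{pn}(G)$ and $\chi_{CF}^{cn}(G)$ denote the minimum numbers of colors in such colorings. *)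

theory Defs
  imports "HOL-Analysis.Analysis"
begin

text \<open>The plane is modelled as the complex numbers. A simple Jordan region is a
closed Jordan curve together with its interior (bounded complementary component).\<close>

definition jordan_region :: "complex set \<Rightarrow> bool" where
  "jordan_region C \<longleftrightarrow>
     (\<exists>g. simple_path g \<and> pathfinish g = pathstart g \<and>
          C = path_image g \<union> inside (path_image g))"

definition fat_witness :: "real \<Rightarrow> complex set \<Rightarrow> complex \<Rightarrow> real \<Rightarrow> real \<Rightarrow> bool" where
  "fat_witness \<rho> C x rA rB \<longleftrightarrow>
     x \<in> C \<and> 0 < rA \<and> cball x rA \<subseteq> C \<and> C \<subseteq> cball x rB \<and> rB / rA \<le> \<rho>"

definition fat :: "real \<Rightarrow> complex set \<Rightarrow> bool" where
  "fat \<rho> C \<longleftrightarrow> jordan_region C \<and> (\<exists>x rA rB. fat_witness \<rho> C x rA rB)"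

definition fat_size :: "real \<Rightarrow> complex set \<Rightarrow> real" where
  "fat_size \<rho> C = Sup {rA. \<exists>x rB. fat_witness \<rho> C x rA rB}"

definition size_ratio :: "real \<Rightarrow> complex set set \<Rightarrow> real" where
  "size_ratio \<rho> F = Max {fat_size \<rho> C1 / fat_size \<rho> C2 | C1 C2. C1 \<in> F \<and> C2 \<in> F}"

definition intersection_adj :: "'a set \<Rightarrow> 'a set \<Rightarrow> bool" where
  "intersection_adj C1 C2 \<longleftrightarrow> C1 \<noteq> C2 \<and> C1 \<inter> C2 \<noteq> {}"

definition open_nbhd :: "'a set \<Rightarrow> ('a \<Rightarrow> 'a \<Rightarrow> bool) \<Rightarrow> 'a \<Rightarrow> 'a set" where
  "open_nbhd V E v = {u \<in> V. E u v}"

definition closed_nbhd :: "'a set \<Rightarrow> ('a \<Rightarrow> 'a \<Rightarrow> bool) \<Rightarrow> 'a \<Rightarrow> 'a set" where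
  "closed_nbhd V E v = insert v (open_nbhd V E v)"

definition has_unique_color :: "('a \<Rightarrow> 'c) \<Rightarrow> 'a set \<Rightarrow> bool" where
  "has_unique_color f S \<longleftrightarrow> (\<exists>u\<in>S. \<forall>w\<in>S. w \<noteq> u \<longrightarrow> f w \<noteq> f u)"

definition pointed_CF_coloring :: "'a set \<Rightarrow> ('a \<Rightarrow> 'a \<Rightarrow> bool) \<Rightarrow> ('a \<Rightarrow> 'c) \<Rightarrow> bool" where
  "pointed_CF_coloring V E f \<longleftrightarrow>
     (\<forall>v\<in>V. open_nbhd V E v \<noteq> {} \<longrightarrow> has_unique_color f (open_nbhd V E v))"

definition closed_CF_coloring :: "'a set \<Rightarrow> ('a \<Rightarrow> 'a \<Rightarrow> bool) \<Rightarrow> ('a \<Rightarrow> 'c) \<Rightarrow> bool" where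
  "closed_CF_coloring V E f \<longleftrightarrow> (\<forall>v\<in>V. has_unique_color f (closed_nbhd V E v))"

definition chi_CF_pn :: "'a set \<Rightarrow> ('a \<Rightarrow> 'a \<Rightarrow> bool) \<Rightarrow> nat" where
  "chi_CF_pn V E = (LEAST n. \<exists>f :: 'a \<Rightarrow> nat. card (f ` V) = n \<and> pointed_CF_coloring V E f)"

definition chi_CF_cn :: "'a set \<Rightarrow> ('a \<Rightarrow> 'a \<Rightarrow> bool) \<Rightarrow> nat" where
  "chi_CF_cn V E = (LEAST n. \<exists>f :: 'a \<Rightarrow> nat. card (f ` V) = n \<and> closed_CF_coloring V E f)"

end

theory Submission
  imports Defs
begin


lemma exists_maximal:
  assumes "finite V" "P {}"
  shows "\<exists>I\<subseteq>V. P I \<and> (\<forall>v\<in>V-I. \<not> P (insert v I))"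
proof -
  define S where "S = {I. I \<subseteq> V \<and> P I}"
  have finS: "finite S" using assms(1) unfolding S_def by (simp add: finite_subset)
  have "{} \<in> S" using assms(2) by (simp add: S_def)
  hence ne: "card ` S \<noteq> {}" by auto
  have "Max (card ` S) \<in> card ` S" using finS ne by (intro Max_in) auto
  then obtain I where I: "I \<in> S" "card I = Max (card ` S)" by auto
  have "\<not> P (insert v I)" if v: "v \<in> V - I" for v
  proof
    assume "P (insert v I)"
    hence "insert v I \<in> S" using I v by (auto simp: S_def)
    hence "card (insert v I) \<le> Max (card ` S)" using finS by (intro Max_ge) auto
    moreover have "finite I" using I assms(1) by (auto simp: S_def intro: finite_subset)
    ultimately show False using I v by simp
  qed
  thus ?thesis using I by (auto simp: S_def)
qed

lemma pointed_comb:
  fixes V :: "'a set" and E :: "'a \<Rightarrow> 'a \<Rightarrow> bool" and g :: "'a \<Rightarrow> 'b" and col :: "'a \<Rightarrow> nat"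
  assumes fin: "finite V" and sym: "\<forall>u w. E u w \<longrightarrow> E w u" and irr: "\<forall>u. \<not> E u u"
   and P1: "\<forall>u\<in>V. \<forall>w\<in>V. u \<noteq> w \<longrightarrow> g u = g w \<longrightarrow> E u w"
   and P2: "\<forall>u\<in>V. \<forall>w\<in>V. col u = col w \<longrightarrow>
      ((\<exists>a\<in>V. E u a \<and> E a w) \<or> (\<exists>a\<in>V. \<exists>b\<in>V. \<exists>c\<in>V. E u a \<and> E a b \<and> E b c \<and> E c w)) \<longrightarrow> g u = g w"
   and colr: "\<forall>u\<in>V. col u < N"
  shows "\<exists>f::'a \<Rightarrow> nat. f ` V \<subseteq> {..<2*N+1} \<and> pointed_CF_coloring V E f"
proof -
  define indep where "indep I \<longleftrightarrow> (\<forall>u\<in>I. \<forall>w\<in>I. \<not> E u w)" for I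
  obtain I where IV: "I \<subseteq> V" and ind: "indep I" and mx: "\<forall>v\<in>V-I. \<not> indep (insert v I)"
  proof -
    have "indep {}" by (simp add: indep_def)
    hence "\<exists>I\<subseteq>V. indep I \<and> (\<forall>v\<in>V-I. \<not> indep (insert v I))"
      using fin by (rule exists_maximal[rotated])
    thus ?thesis using that by auto
  qed
  have dom: "\<exists>u\<in>I. E u v" if "v \<in> V" "v \<notin> I" for v
  proof -
    have "\<not> indep (insert v I)" using mx that by auto
    then obtain u w where "u \<in> insert v I" "w \<in> insert v I" "E u w" by (auto simp: indep_def)
    thus ?thesis using ind irr sym unfolding indep_def by blast
  qed
  define Nb where "Nb v = open_nbhd V E v" for v
  define d where "d v = (SOME w. w \<in> Nb v)" for v
  define J where "J = {v\<in>I. Nb v \<noteq> {}}"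
  define W where "W = d ` J"
  define src where "src w = (SOME v. v \<in> J \<and> d v = w)" for w
  define f where "f v = (if v \<in> I then 1 + col v else if v \<in> W then 1 + N + col (src v) else 0)" for v
  have dJ: "d v \<in> V \<and> E (d v) v" if "v \<in> J" for v
  proof -
    have "\<exists>w. w \<in> Nb v" using that by (auto simp: J_def)
    hence "d v \<in> Nb v" unfolding d_def by (rule someI_ex)
    thus ?thesis by (simp add: Nb_def open_nbhd_def)
  qed
  have srcW: "src w \<in> J \<and> d (src w) = w" if "w \<in> W" for w
  proof -
    have "\<exists>v. v \<in> J \<and> d v = w" using that by (auto simp: W_def)
    thus ?thesis unfolding src_def by (rule someI_ex)
  qed
  have WI: "w \<notin> I" if "w \<in> W" for w
  proof
    assume "w \<in> I"
    have "src w \<in> I" "E w (src w)" using srcW[OF that] dJ[of "src w"] by (auto simp: J_def)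
    thus False using ind \<open>w \<in> I\<close> by (auto simp: indep_def)
  qed
  have JV: "J \<subseteq> V" using IV by (auto simp: J_def)
  have range: "f ` V \<subseteq> {..<2*N+1}"
  proof
    fix y assume "y \<in> f ` V"
    then obtain v where v: "v \<in> V" "y = f v" by auto
    show "y \<in> {..<2*N+1}"
    proof (cases "v \<in> I")
      case True thus ?thesis using v colr by (auto simp: f_def)
    next
      case False
      show ?thesis
      proof (cases "v \<in> W")
        case True
        hence "src v \<in> V" using srcW JV by auto
        thus ?thesis using v colr False True by (auto simp: f_def)
      qed (use v False in \<open>auto simp: f_def\<close>)
    qed
  qed
  have "has_unique_color f (Nb v)" if v: "v \<in> V" "Nb v \<noteq> {}" for v
  proof (cases "v \<in> I")
    case False
    then obtain u where u: "u \<in> I" "E u v" using dom v by blast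
    have uN: "u \<in> Nb v" using u IV by (auto simp: Nb_def open_nbhd_def)
    have "f w \<noteq> f u" if w: "w \<in> Nb v" "w \<noteq> u" for w
    proof
      assume eq: "f w = f u"
      have wV: "w \<in> V" and Ew: "E w v" using w by (auto simp: Nb_def open_nbhd_def)
      have "col u < N" using colr u IV by auto
      hence "w \<in> I" using eq u by (auto simp: f_def split: if_splits)
      hence "col w = col u" using eq u by (auto simp: f_def)
      moreover have "E v w" using Ew sym by blast
      moreover have "u \<in> V" using u IV by blast
      ultimately have "g u = g w" using v(1) u(2) wV by (intro P2[rule_format]) auto
      hence "E u w" using P1 u IV wV w by auto
      thus False using ind u \<open>w \<in> I\<close> by (auto simp: indep_def)
    qed
    thus ?thesis using uN by (auto simp: has_unique_color_def)
  next
    case True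
    hence vJ: "v \<in> J" using v by (auto simp: J_def)
    define w0 where "w0 = d v"
    have w0W: "w0 \<in> W" using vJ by (auto simp: W_def w0_def)
    define s0 where "s0 = src w0"
    have s0: "s0 \<in> J" "d s0 = w0" using srcW[OF w0W] by (auto simp: s0_def)
    have w0N: "w0 \<in> Nb v" using dJ[OF vJ] by (auto simp: w0_def Nb_def open_nbhd_def)
    have fw0: "f w0 = 1 + N + col s0" using WI[OF w0W] w0W by (simp add: f_def s0_def)
    have "f w \<noteq> f w0" if w: "w \<in> Nb v" "w \<noteq> w0" for w
    proof
      assume eq: "f w = f w0"
      have wV: "w \<in> V" and Ew: "E w v" using w by (auto simp: Nb_def open_nbhd_def)
      have wnI: "w \<notin> I" using Ew True ind by (auto simp: indep_def)
      have wW: "w \<in> W" using eq fw0 wnI by (auto simp: f_def split: if_splits)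
      define s1 where "s1 = src w"
      have s1: "s1 \<in> J" "d s1 = w" using srcW[OF wW] by (auto simp: s1_def)
      have "col s1 = col s0" using eq fw0 wnI wW by (simp add: f_def s1_def)
      moreover have "E s0 w0" using dJ[OF s0(1)] s0 sym by auto
      moreover have "E w0 v" using dJ[OF vJ] by (simp add: w0_def)
      moreover have "E v w" using Ew sym by auto
      moreover have "E w s1" using dJ[OF s1(1)] s1 by auto
      moreover have "w0 \<in> V" "s0 \<in> V" "s1 \<in> V" using dJ[OF vJ] s0 s1 JV by (auto simp: w0_def)
      ultimately have "g s0 = g s1" using v(1) wV by (intro P2[rule_format]) (simp, simp, simp, blast)
      have "s0 = s1"
      proof (rule ccontr)
        assume "s0 \<noteq> s1"
        hence "E s0 s1" using P1 \<open>g s0 = g s1\<close> s0 s1 JV by auto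
        thus False using ind s0 s1 by (auto simp: indep_def J_def)
      qed
      thus False using s0 s1 w by simp
    qed
    thus ?thesis using w0N by (auto simp: has_unique_color_def)
  qed
  hence "pointed_CF_coloring V E f" by (auto simp: pointed_CF_coloring_def Nb_def)
  thus ?thesis using range by blast
qed

lemma closed_comb:
  fixes V :: "'a set" and E :: "'a \<Rightarrow> 'a \<Rightarrow> bool" and g :: "'a \<Rightarrow> 'b" and col :: "'a \<Rightarrow> nat"
    and \<kappa> :: "'a \<Rightarrow> nat"
  assumes fin: "finite V" and sym: "\<forall>u w. E u w \<longrightarrow> E w u" and irr: "\<forall>u. \<not> E u u"
   and C1: "\<forall>u\<in>V. \<forall>w\<in>V. u \<noteq> w \<longrightarrow> \<kappa> u = \<kappa> w \<longrightarrow> g u = g w \<longrightarrow> E u w"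
   and C2: "\<forall>v\<in>V. \<forall>u\<in>V. \<forall>w\<in>V. \<kappa> u = \<kappa> v \<longrightarrow> \<kappa> w = \<kappa> v \<longrightarrow> E v u \<longrightarrow> E v w \<longrightarrow> col u = col w \<longrightarrow> g u = g w"
   and colr: "\<forall>u\<in>V. col u < N" and kr: "\<forall>u\<in>V. \<kappa> u \<le> L"
  shows "\<exists>f::'a \<Rightarrow> nat. f ` V \<subseteq> {..< 1 + (L+1)*N} \<and> closed_CF_coloring V E f"
proof -
  define indep where "indep I \<longleftrightarrow> (\<forall>u\<in>I. \<forall>w\<in>I. \<kappa> u = \<kappa> w \<longrightarrow> \<not> E u w)" for I
  obtain I where IV: "I \<subseteq> V" and ind: "indep I" and mx: "\<forall>v\<in>V-I. \<not> indep (insert v I)"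
  proof -
    have "indep {}" by (simp add: indep_def)
    hence "\<exists>I\<subseteq>V. indep I \<and> (\<forall>v\<in>V-I. \<not> indep (insert v I))"
      using fin by (rule exists_maximal[rotated])
    thus ?thesis using that by auto
  qed
  have dom: "\<exists>u\<in>I. \<kappa> u = \<kappa> v \<and> E u v" if "v \<in> V" "v \<notin> I" for v
  proof -
    have "\<not> indep (insert v I)" using mx that by auto
    then obtain u w where "u \<in> insert v I" "w \<in> insert v I" "\<kappa> u = \<kappa> w" "E u w" by (auto simp: indep_def)
    hence uw: "u \<in> insert v I" "w \<in> insert v I" "\<kappa> u = \<kappa> w" "E u w" by blast+
    show ?thesis
    proof (cases "u = v")
      case True
      hence "w \<noteq> v" using irr uw by auto
      hence "w \<in> I" using uw by auto
      thus ?thesis using True uw sym by auto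
    next
      case False
      hence uI: "u \<in> I" using uw by auto
      hence "w = v" using uw ind unfolding indep_def by auto
      thus ?thesis using uI uw by auto
    qed
  qed
  define f where "f v = (if v \<in> I then 1 + \<kappa> v * N + col v else 0)" for v
  have key: "a * N + b = c * N + e \<Longrightarrow> b < N \<Longrightarrow> e < N \<Longrightarrow> a = c \<and> b = e" for a b c e :: nat
    by (metis add.commute div_mult_self1 div_less mod_mult_self1 mod_less add_0 less_nat_zero_code)
  have range: "f ` V \<subseteq> {..< 1 + (L+1)*N}"
  proof
    fix y assume "y \<in> f ` V"
    then obtain v where v: "v \<in> V" "y = f v" by auto
    have "\<kappa> v * N + col v < \<kappa> v * N + N" using colr v by auto
    also have "\<dots> = (\<kappa> v + 1) * N" by simp
    also have "\<dots> \<le> (L+1) * N" using kr v by (intro mult_right_mono) auto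
    finally show "y \<in> {..< 1 + (L+1)*N}" using v by (auto simp: f_def)
  qed
  have "has_unique_color f (closed_nbhd V E v)" if v: "v \<in> V" for v
  proof (cases "v \<in> I")
    case True
    have "f w \<noteq> f v" if w: "w \<in> closed_nbhd V E v" "w \<noteq> v" for w
    proof
      assume eq: "f w = f v"
      have wV: "w \<in> V" and Ew: "E w v" using w by (auto simp: closed_nbhd_def open_nbhd_def)
      have "w \<in> I" using eq True by (auto simp: f_def split: if_splits)
      hence "\<kappa> w * N + col w = \<kappa> v * N + col v" using eq True by (auto simp: f_def)
      hence "\<kappa> w = \<kappa> v" using key colr wV v by blast
      thus False using ind True \<open>w \<in> I\<close> Ew by (auto simp: indep_def)
    qed
    thus ?thesis by (auto simp: has_unique_color_def closed_nbhd_def)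
  next
    case False
    then obtain u where u: "u \<in> I" "\<kappa> u = \<kappa> v" "E u v" using dom v by blast
    have uN: "u \<in> closed_nbhd V E v" using u IV by (auto simp: closed_nbhd_def open_nbhd_def)
    have "f w \<noteq> f u" if w: "w \<in> closed_nbhd V E v" "w \<noteq> u" for w
    proof
      assume eq: "f w = f u"
      have wI: "w \<in> I" using eq u by (auto simp: f_def split: if_splits)
      hence wv: "w \<noteq> v" using False by auto
      have wV: "w \<in> V" and Ew: "E w v" using w wv by (auto simp: closed_nbhd_def open_nbhd_def)
      have "\<kappa> w * N + col w = \<kappa> u * N + col u" using eq u wI by (auto simp: f_def)
      hence kc: "\<kappa> w = \<kappa> u \<and> col w = col u" using key colr wV u IV by blast
      hence "g u = g w" using C2 v wV u IV Ew sym by (metis subsetD)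
      hence "E u w" using C1 u IV wV w kc by auto
      thus False using ind u wI kc by (auto simp: indep_def)
    qed
    thus ?thesis using uN by (auto simp: has_unique_color_def)
  qed
  hence "closed_CF_coloring V E f" by (auto simp: closed_CF_coloring_def)
  thus ?thesis using range by blast
qed



lemma size_facts:
  assumes "fat \<rho> C"
  shows "fat_size \<rho> C > 0"
    and "\<exists>x a b. fat_witness \<rho> C x a b \<and> a > fat_size \<rho> C / 2"
    and "\<And>x a b. fat_witness \<rho> C x a b \<Longrightarrow> a \<le> fat_size \<rho> C"
proof -
  define R where "R = {rA. \<exists>x rB. fat_witness \<rho> C x rA rB}"
  obtain x0 a0 b0 where w0: "fat_witness \<rho> C x0 a0 b0" using assms by (auto simp: fat_def)
  have ub: "a \<le> b0" if aR: "a \<in> R" for a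
  proof -
    obtain x b where w: "fat_witness \<rho> C x a b" using aR by (auto simp: R_def)
    have "cball x a \<subseteq> cball x0 b0" using w w0 by (auto simp: fat_witness_def)
    hence "dist x x0 + a \<le> b0 \<or> a < 0" by (simp add: cball_subset_cball_iff)
    hence "dist x x0 + a \<le> b0" using w by (auto simp: fat_witness_def)
    thus ?thesis using zero_le_dist[of x x0] by linarith
  qed
  have bdd: "bdd_above R" using ub by (auto simp: bdd_above_def)
  have a0R: "a0 \<in> R" using w0 by (auto simp: R_def)
  have S: "fat_size \<rho> C = Sup R" by (simp add: fat_size_def R_def)
  have "a0 \<le> Sup R" using a0R bdd by (rule cSup_upper)
  moreover have "a0 > 0" using w0 by (simp add: fat_witness_def)
  ultimately show pos: "fat_size \<rho> C > 0" using S by simp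
  show "\<And>x a b. fat_witness \<rho> C x a b \<Longrightarrow> a \<le> fat_size \<rho> C"
    using S bdd by (auto simp: R_def intro!: cSup_upper)
  have "Sup R / 2 < Sup R" using pos S by simp
  then obtain a where "a \<in> R" "Sup R / 2 < a" using a0R by (metis less_cSupE empty_iff)
  thus "\<exists>x a b. fat_witness \<rho> C x a b \<and> a > fat_size \<rho> C / 2" using S by (auto simp: R_def)
qed

lemma floor_diff_lt:
  fixes a b :: real
  shows "\<bar>real_of_int (\<lfloor>a\<rfloor> - \<lfloor>b\<rfloor>)\<bar> < \<bar>a - b\<bar> + 1"
proof -
  have "real_of_int \<lfloor>a\<rfloor> \<le> a" "a < real_of_int \<lfloor>a\<rfloor> + 1" "real_of_int \<lfloor>b\<rfloor> \<le> b" "b < real_of_int \<lfloor>b\<rfloor> + 1"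
    by linarith+
  thus ?thesis by (simp add: abs_if) linarith
qed

lemma mod_close_eq:
  fixes a b :: int and M :: int
  assumes "a mod M = b mod M" "\<bar>a - b\<bar> < M"
  shows "a = b"
proof (rule ccontr)
  assume "a \<noteq> b"
  have "M dvd a - b" using assms(1) by (simp add: mod_eq_dvd_iff)
  hence "\<bar>M\<bar> \<le> \<bar>a - b\<bar>" using \<open>a \<noteq> b\<close> by (intro dvd_imp_le_int) auto
  thus False using assms(2) by simp
qed

lemma floor_coord_eq:
  fixes t u h R :: real and M :: nat
  assumes h: "h > 0" and tu: "\<bar>t - u\<bar> \<le> R" and MR: "real M * h \<ge> R + h"
    and md: "\<lfloor>t / h\<rfloor> mod int M = \<lfloor>u / h\<rfloor> mod int M"
  shows "\<lfloor>t / h\<rfloor> = \<lfloor>u / h\<rfloor>"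
proof (rule mod_close_eq[OF md])
  have "\<bar>t / h - u / h\<bar> = \<bar>t - u\<bar> / h" using h by (simp add: diff_divide_distrib[symmetric])
  also have "\<dots> \<le> R / h" using tu h by (simp add: divide_right_mono)
  finally have "\<bar>real_of_int (\<lfloor>t / h\<rfloor> - \<lfloor>u / h\<rfloor>)\<bar> < R / h + 1"
    using floor_diff_lt[of "t/h" "u/h"] by linarith
  also have "R / h + 1 \<le> real M" using MR h by (simp add: field_simps)
  finally show "\<bar>\<lfloor>t / h\<rfloor> - \<lfloor>u / h\<rfloor>\<bar> < int M" by linarith
qed

definition cellof :: "real \<Rightarrow> complex \<Rightarrow> int \<times> int" where
  "cellof h z = (\<lfloor>Re z / h\<rfloor>, \<lfloor>Im z / h\<rfloor>)"

definition colof :: "nat \<Rightarrow> real \<Rightarrow> complex \<Rightarrow> nat" where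
  "colof M h z = nat (\<lfloor>Re z / h\<rfloor> mod int M) * M + nat (\<lfloor>Im z / h\<rfloor> mod int M)"

lemma colof_lt: "M > 0 \<Longrightarrow> colof M h z < M * M"
proof -
  assume M: "M > 0"
  have "nat (\<lfloor>Im z / h\<rfloor> mod int M) < M" using M by (simp add: nat_less_iff)
  moreover have "nat (\<lfloor>Re z / h\<rfloor> mod int M) < M" using M by (simp add: nat_less_iff)
  hence "nat (\<lfloor>Re z / h\<rfloor> mod int M) + 1 \<le> M" by simp
  hence "(nat (\<lfloor>Re z / h\<rfloor> mod int M) + 1) * M \<le> M * M" by (intro mult_right_mono) auto
  ultimately show ?thesis unfolding colof_def by (simp add: algebra_simps)
qed

lemma cell_same:
  fixes h R :: real and M :: nat
  assumes h: "h > 0" and d: "dist p q \<le> R" and MR: "real M * h \<ge> R + h" and M: "M > 0"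
    and c: "colof M h p = colof M h q"
  shows "cellof h p = cellof h q"
proof -
  have key: "a * N + b = c * N + e \<Longrightarrow> b < N \<Longrightarrow> e < N \<Longrightarrow> a = c \<and> b = e" for a b c e N :: nat
    by (metis add.commute div_mult_self1 div_less mod_mult_self1 mod_less add_0 less_nat_zero_code)
  have l1: "nat (\<lfloor>Im z / h\<rfloor> mod int M) < M" for z using M by (simp add: nat_less_iff)
  from key[OF c[unfolded colof_def] l1 l1]
  have e1: "\<lfloor>Re p / h\<rfloor> mod int M = \<lfloor>Re q / h\<rfloor> mod int M" and e2: "\<lfloor>Im p / h\<rfloor> mod int M = \<lfloor>Im q / h\<rfloor> mod int M"
    using M by (auto simp: eq_nat_nat_iff)
  have "\<bar>Re p - Re q\<bar> \<le> R" using d abs_Re_le_cmod[of "p - q"] by (simp add: dist_norm)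
  hence "\<lfloor>Re p / h\<rfloor> = \<lfloor>Re q / h\<rfloor>" using floor_coord_eq[OF h _ MR e1] by simp
  moreover have "\<bar>Im p - Im q\<bar> \<le> R" using d abs_Im_le_cmod[of "p - q"] by (simp add: dist_norm)
  hence "\<lfloor>Im p / h\<rfloor> = \<lfloor>Im q / h\<rfloor>" using floor_coord_eq[OF h _ MR e2] by simp
  ultimately show ?thesis by (simp add: cellof_def)
qed

lemma cell_close:
  assumes h: "h > 0" and c: "cellof h p = cellof h q"
  shows "dist p q < 2 * h"
proof -
  have a: "\<lfloor>Re p / h\<rfloor> = \<lfloor>Re q / h\<rfloor>" "\<lfloor>Im p / h\<rfloor> = \<lfloor>Im q / h\<rfloor>" using c by (auto simp: cellof_def)
  have fl: "of_int \<lfloor>x\<rfloor> \<le> x" "x < of_int \<lfloor>x\<rfloor> + 1" for x :: real by linarith+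
  have "\<bar>Re p / h - Re q / h\<bar> < 1" using fl[of "Re p / h"] fl[of "Re q / h"] a(1) by (simp add: abs_if) linarith
  hence r: "\<bar>Re p - Re q\<bar> < h" using h by (simp add: diff_divide_distrib[symmetric] divide_less_eq)
  have "\<bar>Im p / h - Im q / h\<bar> < 1" using fl[of "Im p / h"] fl[of "Im q / h"] a(2) by (simp add: abs_if) linarith
  hence i: "\<bar>Im p - Im q\<bar> < h" using h by (simp add: diff_divide_distrib[symmetric] divide_less_eq)
  have "dist p q \<le> \<bar>Re (p - q)\<bar> + \<bar>Im (p - q)\<bar>" using cmod_le[of "p - q"] by (simp add: dist_norm)
  thus ?thesis using r i by simp
qed



lemma setup_objs:
  assumes rho: "\<rho> \<ge> 1" and fin: "finite F" and ne: "F \<noteq> {}" and fat: "\<forall>C\<in>F. fat \<rho> C"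
    and sr: "size_ratio \<rho> F \<le> k"
  obtains s xc ra rb S where "s > 0"
    "\<forall>C\<in>F. xc C \<in> C \<and> cball (xc C) (ra C) \<subseteq> C \<and> C \<subseteq> cball (xc C) (rb C) \<and> rb C \<le> \<rho> * ra C
        \<and> ra C \<le> S C \<and> 2 * ra C > S C \<and> s \<le> S C \<and> S C \<le> k * s"
proof -
  define S where "S C = fat_size \<rho> C" for C
  define w where "w C = (SOME (x, a, b). fat_witness \<rho> C x a b \<and> a > S C / 2)" for C
  define xc where "xc C = fst (w C)" for C
  define ra where "ra C = fst (snd (w C))" for C
  define rb where "rb C = snd (snd (w C))" for C
  have W: "fat_witness \<rho> C (xc C) (ra C) (rb C) \<and> ra C > S C / 2" if "C \<in> F" for C
  proof -
    have "\<exists>x a b. fat_witness \<rho> C x a b \<and> a > S C / 2" using size_facts(2) fat that by (simp add: S_def)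
    hence "\<exists>p. (case p of (x, a, b) \<Rightarrow> fat_witness \<rho> C x a b \<and> a > S C / 2)" by auto
    hence "case w C of (x, a, b) \<Rightarrow> fat_witness \<rho> C x a b \<and> a > S C / 2"
      unfolding w_def by (rule someI_ex)
    thus ?thesis by (simp add: xc_def ra_def rb_def split: prod.splits)
  qed
  define s where "s = Min (S ` F)"
  have sin: "s \<in> S ` F" using fin ne by (simp add: s_def)
  then obtain C0 where C0: "C0 \<in> F" "s = S C0" by auto
  have spos: "s > 0" using C0 fat size_facts(1) by (simp add: S_def)
  have finR: "finite {fat_size \<rho> C1 / fat_size \<rho> C2 | C1 C2. C1 \<in> F \<and> C2 \<in> F}"
  proof -
    have "{fat_size \<rho> C1 / fat_size \<rho> C2 | C1 C2. C1 \<in> F \<and> C2 \<in> F} = (\<lambda>(C1, C2). fat_size \<rho> C1 / fat_size \<rho> C2) ` (F \<times> F)"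
      by auto
    thus ?thesis using fin by simp
  qed
  have "\<forall>C\<in>F. xc C \<in> C \<and> cball (xc C) (ra C) \<subseteq> C \<and> C \<subseteq> cball (xc C) (rb C) \<and> rb C \<le> \<rho> * ra C
        \<and> ra C \<le> S C \<and> 2 * ra C > S C \<and> s \<le> S C \<and> S C \<le> k * s"
  proof
    fix C assume C: "C \<in> F"
    have wC: "fat_witness \<rho> C (xc C) (ra C) (rb C)" and h2: "ra C > S C / 2" using W[OF C] by auto
    have raS: "ra C \<le> S C" using size_facts(3)[OF _ wC] fat C by (simp add: S_def)
    have rap: "ra C > 0" using wC by (simp add: fat_witness_def)
    have "rb C / ra C \<le> \<rho>" using wC by (simp add: fat_witness_def)
    hence rb: "rb C \<le> \<rho> * ra C" using rap by (simp add: divide_le_eq mult.commute)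
    have sS: "s \<le> S C" using fin C by (simp add: s_def)
    have "S C / S C0 \<in> {fat_size \<rho> C1 / fat_size \<rho> C2 | C1 C2. C1 \<in> F \<and> C2 \<in> F}"
      using C C0 by (auto simp: S_def)
    hence "S C / S C0 \<le> size_ratio \<rho> F" unfolding size_ratio_def using finR by (rule Max_ge[rotated])
    hence "S C / s \<le> k" using sr C0 by simp
    hence "S C \<le> k * s" using spos by (simp add: divide_le_eq)
    thus "xc C \<in> C \<and> cball (xc C) (ra C) \<subseteq> C \<and> C \<subseteq> cball (xc C) (rb C) \<and> rb C \<le> \<rho> * ra C
        \<and> ra C \<le> S C \<and> 2 * ra C > S C \<and> s \<le> S C \<and> S C \<le> k * s"
      using wC h2 raS rb sS by (auto simp: fat_witness_def)
  qed
  thus ?thesis using spos that by blast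
qed

lemma adj_dist:
  assumes "intersection_adj C D" "C \<subseteq> cball p r" "D \<subseteq> cball q t"
  shows "dist p q \<le> r + t"
proof -
  obtain z where "z \<in> C" "z \<in> D" using assms(1) by (auto simp: intersection_adj_def)
  hence "dist p z \<le> r" "dist q z \<le> t" using assms by auto
  thus ?thesis using dist_triangle[of p q z] by (simp add: dist_commute)
qed

lemma close_adj:
  assumes "C \<noteq> D" "dist p q \<le> r" "cball p r \<subseteq> C" "q \<in> D"
  shows "intersection_adj C D"
  using assms by (auto simp: intersection_adj_def)

lemma pointed_bound:
  assumes rho: "\<rho> \<ge> 1" and k: "k \<ge> 1" and fin: "finite F" and fat: "\<forall>C\<in>F. fat \<rho> C"
    and sr: "size_ratio \<rho> F \<le> k"
  shows "real (chi_CF_pn F intersection_adj) \<le> 2451 * k\<^sup>2 * \<rho>\<^sup>2"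
proof (cases "F = {}")
  case True
  have "chi_CF_pn F intersection_adj \<le> 0" unfolding chi_CF_pn_def
    by (rule Least_le) (auto simp: True pointed_CF_coloring_def)
  thus ?thesis by simp
next
  case False
  obtain s xc ra rb S where spos: "s > 0" and P:
    "\<forall>C\<in>F. xc C \<in> C \<and> cball (xc C) (ra C) \<subseteq> C \<and> C \<subseteq> cball (xc C) (rb C) \<and> rb C \<le> \<rho> * ra C
        \<and> ra C \<le> S C \<and> 2 * ra C > S C \<and> s \<le> S C \<and> S C \<le> k * s"
    using setup_objs[OF rho fin False fat sr] by blast
  define h where "h = s / 4"
  define M where "M = nat \<lceil>32 * \<rho> * k\<rceil> + 2"
  define g where "g C = cellof h (xc C)" for C
  define col where "col C = colof M h (xc C)" for C
  have hpos: "h > 0" using spos by (simp add: h_def)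
  have Mpos: "M > 0" by (simp add: M_def)
  have rkpos: "\<rho> * k \<ge> 1" using mult_mono[of 1 \<rho> 1 k] rho k by simp
  have Mge: "real M \<ge> 32 * \<rho> * k + 2" unfolding M_def by linarith
  have Mle: "real M \<le> 35 * (\<rho> * k)" unfolding M_def using rkpos by linarith
  have rbC: "rb C \<le> \<rho> * k * s" if "C \<in> F" for C
  proof -
    have "rb C \<le> \<rho> * ra C" "ra C \<le> S C" "S C \<le> k * s" using P that by auto
    moreover have "\<rho> * ra C \<le> \<rho> * (k * s)" using calculation rho by (intro mult_left_mono) auto
    ultimately have "rb C \<le> \<rho> * (k * s)" by linarith
    thus ?thesis by (simp add: mult.assoc)
  qed
  have edge: "dist (xc C) (xc D) \<le> 2 * (\<rho> * k * s)" if "C \<in> F" "D \<in> F" "intersection_adj C D" for C D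
  proof -
    have "dist (xc C) (xc D) \<le> rb C + rb D" using adj_dist[OF that(3)] P that by auto
    thus ?thesis using rbC[OF that(1)] rbC[OF that(2)] by linarith
  qed
  have MR: "real M * h \<ge> 8 * (\<rho> * k * s) + h"
  proof -
    have "real M * h \<ge> (32 * \<rho> * k + 2) * h" using Mge hpos by (intro mult_right_mono) auto
    thus ?thesis using hpos by (simp add: h_def algebra_simps)
  qed
  have "\<exists>f::complex set \<Rightarrow> nat. f ` F \<subseteq> {..<2*(M*M)+1} \<and> pointed_CF_coloring F intersection_adj f"
  proof (rule pointed_comb[where g = g and col = col])
    show "finite F" by fact
    show "\<forall>u w. intersection_adj u w \<longrightarrow> intersection_adj w u" by (auto simp: intersection_adj_def)
    show "\<forall>u. \<not> intersection_adj u u" by (auto simp: intersection_adj_def)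
    show "\<forall>u\<in>F. col u < M * M" using colof_lt[OF Mpos] by (simp add: col_def)
    show "\<forall>u\<in>F. \<forall>w\<in>F. u \<noteq> w \<longrightarrow> g u = g w \<longrightarrow> intersection_adj u w"
    proof (intro ballI impI)
      fix u w assume uw: "u \<in> F" "w \<in> F" "u \<noteq> w" "g u = g w"
      have "dist (xc u) (xc w) < 2 * h" using cell_close[OF hpos] uw by (simp add: g_def)
      also have "2 * h < ra u" using P uw spos by (auto simp: h_def)
      finally show "intersection_adj u w" using P uw by (intro close_adj[of u w "xc u" "xc w" "ra u"]) auto
    qed
    show "\<forall>u\<in>F. \<forall>w\<in>F. col u = col w \<longrightarrow>
      ((\<exists>a\<in>F. intersection_adj u a \<and> intersection_adj a w) \<or> (\<exists>a\<in>F. \<exists>b\<in>F. \<exists>c\<in>F. intersection_adj u a \<and> intersection_adj a b \<and> intersection_adj b c \<and> intersection_adj c w)) \<longrightarrow> g u = g w"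
    proof (intro ballI impI)
      fix u w assume uw: "u \<in> F" "w \<in> F" and cc: "col u = col w"
        and path: "(\<exists>a\<in>F. intersection_adj u a \<and> intersection_adj a w) \<or> (\<exists>a\<in>F. \<exists>b\<in>F. \<exists>c\<in>F. intersection_adj u a \<and> intersection_adj a b \<and> intersection_adj b c \<and> intersection_adj c w)"
      define B where "B = \<rho> * k * s"
      have Bpos: "B \<ge> 0" using spos rkpos by (simp add: B_def)
      have "dist (xc u) (xc w) \<le> 8 * B"
        using path
      proof
        assume "\<exists>a\<in>F. intersection_adj u a \<and> intersection_adj a w"
        then obtain a where a: "a \<in> F" "intersection_adj u a" "intersection_adj a w" by blast
        have "dist (xc u) (xc w) \<le> dist (xc u) (xc a) + dist (xc a) (xc w)" by (rule dist_triangle)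
        also have "\<dots> \<le> 2 * B + 2 * B" using edge[OF uw(1) a(1,2)] edge[OF a(1) uw(2) a(3)] by (simp add: B_def)
        finally show ?thesis using Bpos by linarith
      next
        assume "\<exists>a\<in>F. \<exists>b\<in>F. \<exists>c\<in>F. intersection_adj u a \<and> intersection_adj a b \<and> intersection_adj b c \<and> intersection_adj c w"
        then obtain a b c where abc: "a \<in> F" "b \<in> F" "c \<in> F" "intersection_adj u a" "intersection_adj a b" "intersection_adj b c" "intersection_adj c w" by blast
        have "dist (xc u) (xc w) \<le> dist (xc u) (xc a) + dist (xc a) (xc b) + dist (xc b) (xc c) + dist (xc c) (xc w)"
          using dist_triangle[of "xc u" "xc w" "xc a"] dist_triangle[of "xc a" "xc w" "xc b"] dist_triangle[of "xc b" "xc w" "xc c"] by linarith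
        also have "\<dots> \<le> 2 * B + 2 * B + 2 * B + 2 * B"
          using edge[OF uw(1) abc(1,4)] edge[OF abc(1,2,5)] edge[OF abc(2,3,6)] edge[OF abc(3) uw(2) abc(7)] by (simp add: B_def)
        finally show ?thesis by linarith
      qed
      thus "g u = g w" using cell_same[OF hpos _ _ Mpos, of "xc u" "xc w" "8 * B"] MR cc by (simp add: g_def col_def B_def)
    qed
  qed
  then obtain f :: "complex set \<Rightarrow> nat" where f: "f ` F \<subseteq> {..<2*(M*M)+1}" "pointed_CF_coloring F intersection_adj f" by blast
  have "chi_CF_pn F intersection_adj \<le> card (f ` F)" unfolding chi_CF_pn_def
    by (rule Least_le) (use f in blast)
  also have "card (f ` F) \<le> 2*(M*M)+1" using card_mono[OF _ f(1)] by simp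
  finally have c0: "chi_CF_pn F intersection_adj \<le> 2*(M*M)+1" .
  hence "real (chi_CF_pn F intersection_adj) \<le> real (2*(M*M)+1)" by (simp only: of_nat_le_iff)
  hence c: "real (chi_CF_pn F intersection_adj) \<le> 2 * (real M * real M) + 1" by simp
  have "real M * real M \<le> (35 * (\<rho> * k)) * (35 * (\<rho> * k))" using Mle by (intro mult_mono) auto
  moreover have "(35 * (\<rho> * k)) * (35 * (\<rho> * k)) = 1225 * (\<rho> * k)^2" by (simp add: power2_eq_square)
  moreover have "1 \<le> (\<rho> * k)^2" using rkpos by (simp add: one_le_power)
  ultimately have "2 * (real M * real M) + 1 \<le> 2450 * (\<rho> * k)^2 + (\<rho> * k)^2" by linarith
  thus ?thesis using c by (simp add: power_mult_distrib algebra_simps)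
qed


lemma closed_bound:
  assumes rho: "\<rho> \<ge> 1" and k: "k \<ge> 2" and fin: "finite F" and fat: "\<forall>C\<in>F. fat \<rho> C"
    and sr: "size_ratio \<rho> F \<le> k"
  shows "real (chi_CF_cn F intersection_adj) \<le> 3700 * \<rho>\<^sup>2 * ln k"
proof -
  have lnk: "ln k > 0" using k by simp
  have t1: "log 2 k \<ge> 1" using k by simp
  show ?thesis
  proof (cases "F = {}")
  case True
  have "chi_CF_cn F intersection_adj \<le> 0" unfolding chi_CF_cn_def
    by (rule Least_le) (auto simp: True closed_CF_coloring_def)
  thus ?thesis using lnk by simp
next
  case False
  obtain s xc ra rb S where spos: "s > 0" and P:
    "\<forall>C\<in>F. xc C \<in> C \<and> cball (xc C) (ra C) \<subseteq> C \<and> C \<subseteq> cball (xc C) (rb C) \<and> rb C \<le> \<rho> * ra C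
        \<and> ra C \<le> S C \<and> 2 * ra C > S C \<and> s \<le> S C \<and> S C \<le> k * s"
    using setup_objs[OF rho fin False fat sr] by blast
  define \<kappa> where "\<kappa> C = nat \<lfloor>log 2 (S C / s)\<rfloor>" for C
  define hh where "hh C = 2 ^ \<kappa> C * s / 4" for C
  define M where "M = nat \<lceil>32 * \<rho>\<rceil> + 2"
  define L where "L = nat \<lfloor>log 2 k\<rfloor>"
  define g where "g C = cellof (hh C) (xc C)" for C
  define col where "col C = colof M (hh C) (xc C)" for C
  have Mpos: "M > 0" by (simp add: M_def)
  have Mge: "real M \<ge> 32 * \<rho> + 2" unfolding M_def by linarith
  have Mle: "real M \<le> 35 * \<rho>" unfolding M_def using rho by linarith
  have hpos: "hh C > 0" for C using spos by (simp add: hh_def)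
  have kap: "4 * hh C \<le> S C \<and> S C < 8 * hh C" if C: "C \<in> F" for C
  proof -
    have x1: "S C / s \<ge> 1" using P C spos by auto
    hence lg: "log 2 (S C / s) \<ge> 0" by simp
    have "2 powr real_of_int \<lfloor>log 2 (S C / s)\<rfloor> \<le> S C / s \<and> S C / s < 2 powr (real_of_int \<lfloor>log 2 (S C / s)\<rfloor> + 1)"
      using floor_log_eq_powr_iff[of "S C / s" 2 "\<lfloor>log 2 (S C / s)\<rfloor>"] x1 by simp
    moreover have "real_of_int \<lfloor>log 2 (S C / s)\<rfloor> = real (\<kappa> C)" using lg by (simp add: \<kappa>_def)
    ultimately have q: "2 powr real (\<kappa> C) \<le> S C / s \<and> S C / s < 2 powr (real (\<kappa> C) + 1)" by simp
    have e1: "2 powr real (\<kappa> C) = (2::real) ^ \<kappa> C" by (simp add: powr_realpow)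
    have e2: "2 powr (real (\<kappa> C) + 1) = (2::real) ^ (\<kappa> C + 1)" using powr_realpow[of 2 "\<kappa> C + 1"] by (simp add: add.commute)
    have "2 ^ \<kappa> C \<le> S C / s \<and> S C / s < 2 ^ (\<kappa> C + 1)" using q unfolding e1 e2 .
    hence "2 ^ \<kappa> C * s \<le> S C \<and> S C < 2 ^ (\<kappa> C + 1) * s" using spos by (simp add: field_simps)
    thus ?thesis by (simp add: hh_def mult_ac)
  qed
  have kL: "\<kappa> C \<le> L" if C: "C \<in> F" for C
  proof -
    have "S C / s \<le> k" using P C spos by (simp add: divide_le_eq mult.commute)
    moreover have "S C / s > 0" using P C spos by auto
    ultimately have "log 2 (S C / s) \<le> log 2 k" by simp
    hence "\<lfloor>log 2 (S C / s)\<rfloor> \<le> \<lfloor>log 2 k\<rfloor>" by (rule floor_mono)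
    thus ?thesis by (simp add: \<kappa>_def L_def nat_mono)
  qed
  have rbC: "rb C < 8 * \<rho> * hh C" if "C \<in> F" for C
  proof -
    have "rb C \<le> \<rho> * ra C" "ra C \<le> S C" "S C < 8 * hh C" using P kap that by auto
    moreover have "\<rho> * ra C \<le> \<rho> * S C" using calculation rho by (intro mult_left_mono) auto
    ultimately have "rb C \<le> \<rho> * S C" by linarith
    also have "\<rho> * S C < \<rho> * (8 * hh C)" using rho \<open>S C < 8 * hh C\<close> by simp
    finally show ?thesis by simp
  qed
  have edge: "dist (xc C) (xc D) \<le> rb C + rb D" if "C \<in> F" "D \<in> F" "intersection_adj C D" for C D
    using adj_dist[OF that(3)] P that by auto
  have "\<exists>f::complex set \<Rightarrow> nat. f ` F \<subseteq> {..< 1 + (L+1)*(M*M)} \<and> closed_CF_coloring F intersection_adj f"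
  proof (rule closed_comb[where g = g and col = col and \<kappa> = \<kappa>])
    show "finite F" by fact
    show "\<forall>u w. intersection_adj u w \<longrightarrow> intersection_adj w u" by (auto simp: intersection_adj_def)
    show "\<forall>u. \<not> intersection_adj u u" by (auto simp: intersection_adj_def)
    show "\<forall>u\<in>F. col u < M * M" using colof_lt[OF Mpos] by (simp add: col_def)
    show "\<forall>u\<in>F. \<kappa> u \<le> L" using kL by blast
    show "\<forall>u\<in>F. \<forall>w\<in>F. u \<noteq> w \<longrightarrow> \<kappa> u = \<kappa> w \<longrightarrow> g u = g w \<longrightarrow> intersection_adj u w"
    proof (intro ballI impI)
      fix u w assume uw: "u \<in> F" "w \<in> F" "u \<noteq> w" "\<kappa> u = \<kappa> w" "g u = g w"
      have hh: "hh w = hh u" using uw by (simp add: hh_def)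
      have "dist (xc u) (xc w) < 2 * hh u" using cell_close[OF hpos] uw hh by (simp add: g_def)
      also have "2 * hh u < ra u" using P uw kap[OF uw(1)] by auto
      finally show "intersection_adj u w" using P uw by (intro close_adj[of u w "xc u" "xc w" "ra u"]) auto
    qed
    show "\<forall>v\<in>F. \<forall>u\<in>F. \<forall>w\<in>F. \<kappa> u = \<kappa> v \<longrightarrow> \<kappa> w = \<kappa> v \<longrightarrow> intersection_adj v u \<longrightarrow> intersection_adj v w \<longrightarrow> col u = col w \<longrightarrow> g u = g w"
    proof (intro ballI impI)
      fix v u w assume V: "v \<in> F" "u \<in> F" "w \<in> F" and ku: "\<kappa> u = \<kappa> v" and kw: "\<kappa> w = \<kappa> v"
        and e1: "intersection_adj v u" and e2: "intersection_adj v w" and cc: "col u = col w"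
      define h where "h = hh v"
      have hu: "hh u = h" "hh w = h" using ku kw by (simp_all add: hh_def h_def)
      have "dist (xc u) (xc w) \<le> dist (xc u) (xc v) + dist (xc v) (xc w)" by (rule dist_triangle)
      also have "\<dots> \<le> (rb v + rb u) + (rb v + rb w)" using edge[OF V(1,2) e1] edge[OF V(1,3) e2] by (simp add: dist_commute)
      also have "\<dots> \<le> 32 * \<rho> * h" using rbC[OF V(1)] rbC[OF V(2)] rbC[OF V(3)] hu by (simp add: h_def)
      finally have d: "dist (xc u) (xc w) \<le> 32 * \<rho> * h" .
      have MR: "real M * h \<ge> 32 * \<rho> * h + h"
      proof -
        have "real M * h \<ge> (32 * \<rho> + 2) * h" using Mge hpos[of v] by (intro mult_right_mono) (auto simp: h_def)
        thus ?thesis using hpos[of v] by (simp add: h_def algebra_simps)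
      qed
      show "g u = g w" using cell_same[OF hpos[of v] _ _ Mpos, of "xc u" "xc w" "32 * \<rho> * hh v"] d MR cc hu
        by (simp add: g_def col_def h_def)
    qed
  qed
  then obtain f :: "complex set \<Rightarrow> nat" where f: "f ` F \<subseteq> {..< 1 + (L+1)*(M*M)}" "closed_CF_coloring F intersection_adj f" by blast
  have "chi_CF_cn F intersection_adj \<le> card (f ` F)" unfolding chi_CF_cn_def
    by (rule Least_le) (use f in blast)
  also have "card (f ` F) \<le> 1 + (L+1)*(M*M)" using card_mono[OF _ f(1)] by simp
  finally have c0: "chi_CF_cn F intersection_adj \<le> 1 + (L+1)*(M*M)" .
  hence "real (chi_CF_cn F intersection_adj) \<le> real (1 + (L+1)*(M*M))" by (simp only: of_nat_le_iff)
  hence c: "real (chi_CF_cn F intersection_adj) \<le> 1 + (real L + 1) * (real M * real M)" by (simp add: algebra_simps)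
  have MM: "real M * real M \<le> 1225 * \<rho>\<^sup>2" using Mle mult_mono[OF Mle Mle] by (simp add: power2_eq_square)
  have Lb: "real L \<le> log 2 k" using t1 by (simp add: L_def)
  hence L2: "real L + 1 \<le> 2 * log 2 k" using t1 by linarith
  have r2: "\<rho>\<^sup>2 \<ge> 1" using rho by (simp add: one_le_power)
  have "(real L + 1) * (real M * real M) \<le> (2 * log 2 k) * (1225 * \<rho>\<^sup>2)"
    by (rule mult_mono[OF L2 MM]) (use t1 in auto)
  moreover have "1 \<le> \<rho>\<^sup>2 * log 2 k" using mult_mono[of 1 "\<rho>\<^sup>2" 1 "log 2 k"] r2 t1 by simp
  moreover have "2 * log 2 k * (1225 * \<rho>\<^sup>2) = 2450 * (\<rho>\<^sup>2 * log 2 k)" by (simp add: algebra_simps)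
  ultimately have "real (chi_CF_cn F intersection_adj) \<le> 2451 * (\<rho>\<^sup>2 * log 2 k)" using c by linarith
  also have "log 2 k = ln k / ln 2" by (simp add: log_def)
  also have "ln k / ln 2 \<le> ln k * (3/2)"
  proof -
    have "ln (2::real) \<ge> 2/3" by (rule ln2_ge_two_thirds)
    hence "ln k * 1 \<le> ln k * ((3/2) * ln 2)" using lnk by (intro mult_left_mono) auto
    hence "ln k \<le> ln k * (3/2) * ln 2" by (simp add: mult.assoc)
    thus ?thesis using \<open>ln (2::real) \<ge> 2/3\<close> by (simp add: divide_le_eq)
  qed
  hence "2451 * (\<rho>\<^sup>2 * (ln k / ln 2)) \<le> 2451 * (\<rho>\<^sup>2 * (ln k * (3/2)))"
    using r2 by (intro mult_left_mono) auto
  also have "\<dots> \<le> 3700 * \<rho>\<^sup>2 * ln k" using r2 lnk by (simp add: algebra_simps)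
  finally show ?thesis .
qed
qed




theorem proposition1p7:
  "\<exists>c1 c2 :: real. \<forall>(\<rho>::real) (k::real) (F::complex set set).
     \<rho> \<ge> 1 \<longrightarrow> k \<ge> 1 \<longrightarrow> finite F \<longrightarrow> (\<forall>C\<in>F. fat \<rho> C) \<longrightarrow>
     size_ratio \<rho> F \<le> k \<longrightarrow>
       real (chi_CF_pn F intersection_adj) \<le> c1 * k\<^sup>2 * \<rho>\<^sup>2 \<and>
       (k \<ge> 2 \<longrightarrow> real (chi_CF_cn F intersection_adj) \<le> c2 * \<rho>\<^sup>2 * ln k)"
  using pointed_bound closed_bound by blast

end
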